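(* Consider the model described in the context and suppose the Lipschitz assumption holds. Let $z_1(x)=\mathbb P(x_1=x)$, $x\in\mathcal X$. For $t\in\mathbb N_T$ let $\psi_t(z)\in\mathcal G$ be any minimizer of the right-hand side of $\hat V_t(z)=\min_{\gamma\in\mathcal G}\big(\hat c_t(z,\gamma)+\hat V_{t+1}(\hat f_t(z,\gamma))\big)$, and define the deterministic sequence $z_{t+1}=\hat f_t(z_t,\psi_t(z_t))$. Define the fully decentralized strategy $\mathbf g=\{g_t\}_{t=1}^T$ in which every agent $i$ uses $u^i_t=g_t(x^i_t)$ with $$g_t(x):=\psi_t(z_t)(x),\qquad x\in\mathcal X,\ t\in\mathbb N_T.$$ Then $|J(\mathbf g)-J^\ast|\le \epsilon(n)$ for some $\epsilon(n)\in\mathcal O(1/\sqrt n)$.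
   Context: Fix $n\in\mathbb N$ agents, a horizon $T\in\mathbb N$, and finite sets $\mathcal X$ (states), $\mathcal U$ (actions), $\mathcal W$ (noises); $\mathbb N_k=\{1,\dots,k\}$. Let $\mathcal I(\mathcal X)=[0,1]^{\mathcal X}$, $\Delta(\mathcal X)$ the set of probability vectors on $\mathcal X$, and $\mathcal M_n=\{m\in\Delta(\mathcal X): m(x)\in\{0,\tfrac1n,\dots,1\}\ \forall x\}$. Agent $i\in\mathbb N_n$ has state $x^i_t\in\mathcal X$ and action $u^i_t\in\mathcal U$ at time $t\in\mathbb N_T$; the mean-field is $m_t(x)=\frac1n\sum_{i=1}^n\mathbb 1(x^i_t=x)$. Dynamics: $x^i_{t+1}=f_t(x^i_t,u^i_t,w^i_t,m_t)$ with $f_t:\mathcal X\times\mathcal U\times\mathcal W\times\mathcal I(\mathcal X)\to\mathcal X$. The initial states $x^1_1,\dots,x^n_1$ are i.i.d. with law $\mathbb P(x_1=\cdot)$; for each $t$, $w^1_t,\dots,w^n_t$ are i.i.d. with common law $\mathbb P(w_t=\cdot)$; initial states and all noises are mutually independent. Transition probabilities: $\mathbb P(y\mid x,u,z)=\sum_{w\in\mathcal W}\mathbb 1(f_t(x,u,w,z)=y)\,\mathbb P(w_t=w)$ for $z\in\mathcal I(\mathcal X)$. Costs $\ell_t:\mathcal X\times\mathcal U\times\mathcal I(\mathcal X)\to\mathbb R_{\ge0}$. Lipschitz assumption: there are constants $K^1_t,K^2_t>0$ with $|\mathbb P(y|x,u,z_1)-\mathbb P(y|x,u,z_2)|\le K^1_t\|z_1-z_2\|_\infty$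 and $|\ell_t(x,u,z_1)-\ell_t(x,u,z_2)|\le K^2_t\|z_1-z_2\|_\infty$ for all $x,y\in\mathcal X,u\in\mathcal U,z_1,z_2\in\mathcal I(\mathcal X)$. For a strategy, its cost is $J=\mathbb E\big[\sum_{t=1}^T\frac1n\sum_{i=1}^n\ell_t(x^i_t,u^i_t,m_t)\big]$. $J^\ast$ is the optimal cost over mean-field sharing strategies, i.e. strategies of the form $u^i_t=g_t(x^i_t,m_t)$ with $g_t:\mathcal X\times\mathcal M_n\to\mathcal U$ common to all agents. $\mathcal G$ is the finite set of all maps $\gamma:\mathcal X\to\mathcal U$. For $z\in\mathcal I(\mathcal X)$, $\gamma\in\mathcal G$: $\hat f_t(z,\gamma)(y)=\sum_{x}z(x)\mathbb P(y|x,\gamma(x),z)$ and $\hat c_t(z,\gamma)=\sum_x z(x)\ell_t(x,\gamma(x),z)$. The functions $\hat V_t:\Delta(\mathcal X)\to\mathbb R$ are defined by $\hat V_{T+1}\equiv0$ and $\hat V_t(z)=\min_{\gamma\in\mathcal G}\big(\hat c_t(z,\gamma)+\hat V_{t+1}(\hat f_t(z,\gamma))\big)$ for $t=T,\dots,1$. All model data ($T,\mathcal X,\mathcal U,\mathcal W,f_t,\ell_t$, the laws of initial states and noises) do not depend on $n$; $\mathcal O(1/\sqrt n)$ denotes a quantity bounded by $C/\sqrt n$ with $C$ independent of $n$. *)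

theory Defs
  imports "HOL-Probability.Probability"
begin

text \<open>Model data (independent of n):
  f  :: nat => 'x => 'u => 'w => ('x => real) => 'x      dynamics f_t(x,u,w,z)
  l  :: nat => 'x => 'u => ('x => real) => real          costs ell_t(x,u,z)
  p0 :: 'x pmf                                           law of initial states
  pw :: nat => 'w pmf                                    law of noises at time t
  Agents are indexed by {0..<n}; a joint state is a function nat => 'x.\<close>

definition in_I :: "('x::finite \<Rightarrow> real) \<Rightarrow> bool" where
  "in_I z \<longleftrightarrow> (\<forall>x. 0 \<le> z x \<and> z x \<le> 1)"

definition in_Delta :: "('x::finite \<Rightarrow> real) \<Rightarrow> bool" where
  "in_Delta z \<longleftrightarrow> (\<forall>x. 0 \<le> z x) \<and> (\<Sum>x\<in>UNIV. z x) = 1"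

definition supnorm :: "('x::finite \<Rightarrow> real) \<Rightarrow> real" where
  "supnorm z = Max (range (\<lambda>x. \<bar>z x\<bar>))"

definition trans_prob ::
  "(nat \<Rightarrow> 'x \<Rightarrow> 'u \<Rightarrow> 'w::finite \<Rightarrow> ('x \<Rightarrow> real) \<Rightarrow> 'x) \<Rightarrow> (nat \<Rightarrow> 'w pmf)
     \<Rightarrow> nat \<Rightarrow> 'x \<Rightarrow> 'x \<Rightarrow> 'u \<Rightarrow> ('x \<Rightarrow> real) \<Rightarrow> real" where
  "trans_prob f pw t y x u z = (\<Sum>w\<in>UNIV. (if f t x u w z = y then 1 else 0) * pmf (pw t) w)"

definition mf :: "nat \<Rightarrow> (nat \<Rightarrow> 'x) \<Rightarrow> ('x \<Rightarrow> real)" where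
  "mf n xs = (\<lambda>x. real (card {i\<in>{0..<n}. xs i = x}) / real n)"

text \<open>Law of the joint state at time k+1 of n agents using the (common)
  strategy u^i_t = h t (x^i_t) (m_t).\<close>
primrec state_dist ::
  "(nat \<Rightarrow> 'x \<Rightarrow> 'u \<Rightarrow> 'w \<Rightarrow> ('x \<Rightarrow> real) \<Rightarrow> 'x) \<Rightarrow> 'x pmf \<Rightarrow> (nat \<Rightarrow> 'w pmf)
     \<Rightarrow> nat \<Rightarrow> (nat \<Rightarrow> 'x \<Rightarrow> ('x \<Rightarrow> real) \<Rightarrow> 'u) \<Rightarrow> nat \<Rightarrow> (nat \<Rightarrow> 'x) pmf" where
  "state_dist f p0 pw n h 0 = Pi_pmf {0..<n} undefined (\<lambda>_. p0)"
| "state_dist f p0 pw n h (Suc k) =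
     bind_pmf (state_dist f p0 pw n h k) (\<lambda>xs.
       Pi_pmf {0..<n} undefined (\<lambda>i.
         map_pmf (\<lambda>w. f (Suc k) (xs i) (h (Suc k) (xs i) (mf n xs)) w (mf n xs)) (pw (Suc k))))"

definition Jcost ::
  "nat \<Rightarrow> (nat \<Rightarrow> 'x \<Rightarrow> 'u \<Rightarrow> 'w \<Rightarrow> ('x \<Rightarrow> real) \<Rightarrow> 'x) \<Rightarrow> (nat \<Rightarrow> 'x \<Rightarrow> 'u \<Rightarrow> ('x \<Rightarrow> real) \<Rightarrow> real)
     \<Rightarrow> 'x pmf \<Rightarrow> (nat \<Rightarrow> 'w pmf) \<Rightarrow> nat \<Rightarrow> (nat \<Rightarrow> 'x \<Rightarrow> ('x \<Rightarrow> real) \<Rightarrow> 'u) \<Rightarrow> real" where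
  "Jcost T f l p0 pw n h =
     (\<Sum>t\<in>{1..T}. measure_pmf.expectation (state_dist f p0 pw n h (t - 1))
        (\<lambda>xs. (1 / real n) * (\<Sum>i\<in>{0..<n}. l t (xs i) (h t (xs i) (mf n xs)) (mf n xs))))"

text \<open>Optimal cost over mean-field sharing strategies u^i_t = g_t(x^i_t, m_t).\<close>
definition Jstar ::
  "nat \<Rightarrow> (nat \<Rightarrow> 'x \<Rightarrow> 'u \<Rightarrow> 'w \<Rightarrow> ('x \<Rightarrow> real) \<Rightarrow> 'x) \<Rightarrow> (nat \<Rightarrow> 'x \<Rightarrow> 'u \<Rightarrow> ('x \<Rightarrow> real) \<Rightarrow> real)
     \<Rightarrow> 'x pmf \<Rightarrow> (nat \<Rightarrow> 'w pmf) \<Rightarrow> nat \<Rightarrow> real" where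
  "Jstar T f l p0 pw n = (INF h. Jcost T f l p0 pw n h)"

definition hat_f ::
  "(nat \<Rightarrow> 'x::finite \<Rightarrow> 'u \<Rightarrow> 'w::finite \<Rightarrow> ('x \<Rightarrow> real) \<Rightarrow> 'x) \<Rightarrow> (nat \<Rightarrow> 'w pmf)
     \<Rightarrow> nat \<Rightarrow> ('x \<Rightarrow> real) \<Rightarrow> ('x \<Rightarrow> 'u) \<Rightarrow> ('x \<Rightarrow> real)" where
  "hat_f f pw t z \<gamma> = (\<lambda>y. \<Sum>x\<in>UNIV. z x * trans_prob f pw t y x (\<gamma> x) z)"

definition hat_c ::
  "(nat \<Rightarrow> 'x::finite \<Rightarrow> 'u \<Rightarrow> ('x \<Rightarrow> real) \<Rightarrow> real) \<Rightarrow> nat \<Rightarrow> ('x \<Rightarrow> real) \<Rightarrow> ('x \<Rightarrow> 'u) \<Rightarrow> real" where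
  "hat_c l t z \<gamma> = (\<Sum>x\<in>UNIV. z x * l t x (\<gamma> x) z)"

text \<open>Backward recursion: W k = hat V_(T+1-k), i.e. k steps before the end.\<close>
primrec Wval ::
  "nat \<Rightarrow> (nat \<Rightarrow> 'x::finite \<Rightarrow> 'u::finite \<Rightarrow> 'w::finite \<Rightarrow> ('x \<Rightarrow> real) \<Rightarrow> 'x)
     \<Rightarrow> (nat \<Rightarrow> 'x \<Rightarrow> 'u \<Rightarrow> ('x \<Rightarrow> real) \<Rightarrow> real) \<Rightarrow> (nat \<Rightarrow> 'w pmf)
     \<Rightarrow> nat \<Rightarrow> ('x \<Rightarrow> real) \<Rightarrow> real" where
  "Wval T f l pw 0 z = 0"
| "Wval T f l pw (Suc k) z =
     Min (range (\<lambda>\<gamma>. hat_c l (T - k) z \<gamma> + Wval T f l pw k (hat_f f pw (T - k) z \<gamma>)))"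

text \<open>hat V_t for t in {1..T+1}.\<close>
definition Vhat ::
  "nat \<Rightarrow> (nat \<Rightarrow> 'x::finite \<Rightarrow> 'u::finite \<Rightarrow> 'w::finite \<Rightarrow> ('x \<Rightarrow> real) \<Rightarrow> 'x)
     \<Rightarrow> (nat \<Rightarrow> 'x \<Rightarrow> 'u \<Rightarrow> ('x \<Rightarrow> real) \<Rightarrow> real) \<Rightarrow> (nat \<Rightarrow> 'w pmf)
     \<Rightarrow> nat \<Rightarrow> ('x \<Rightarrow> real) \<Rightarrow> real" where
  "Vhat T f l pw t z = Wval T f l pw (T + 1 - t) z"

text \<open>Deterministic trajectory: ztraj k = z_(k+1).\<close>
primrec ztraj ::
  "(nat \<Rightarrow> 'x::finite \<Rightarrow> 'u \<Rightarrow> 'w::finite \<Rightarrow> ('x \<Rightarrow> real) \<Rightarrow> 'x) \<Rightarrow> 'x pmf \<Rightarrow> (nat \<Rightarrow> 'w pmf)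
     \<Rightarrow> (nat \<Rightarrow> ('x \<Rightarrow> real) \<Rightarrow> ('x \<Rightarrow> 'u)) \<Rightarrow> nat \<Rightarrow> ('x \<Rightarrow> real)" where
  "ztraj f p0 pw \<psi> 0 = (\<lambda>x. pmf p0 x)"
| "ztraj f p0 pw \<psi> (Suc k) = hat_f f pw (Suc k) (ztraj f p0 pw \<psi> k) (\<psi> (Suc k) (ztraj f p0 pw \<psi> k))"

end

theory Submission
  imports Defs
begin



lemma supnorm_ge: "\<bar>z x\<bar> \<le> supnorm (z::'x::finite \<Rightarrow> real)"
  unfolding supnorm_def by (rule Max_ge) auto

lemma supnorm_nonneg: "0 \<le> supnorm (z::'x::finite \<Rightarrow> real)"
  using supnorm_ge[of z undefined] by linarith

lemma supnorm_le: "(\<And>x. \<bar>z x\<bar> \<le> c) \<Longrightarrow> supnorm (z::'x::finite \<Rightarrow> real) \<le> c"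
  unfolding supnorm_def by (subst Max_le_iff) auto

lemma supnorm_le_sum: "supnorm (z::'x::finite \<Rightarrow> real) \<le> (\<Sum>x\<in>UNIV. \<bar>z x\<bar>)"
  by (rule supnorm_le) (rule member_le_sum, auto)

lemma supnorm_minus_sym: "supnorm ((a::'x::finite \<Rightarrow> real) - b) = supnorm (b - a)"
  unfolding supnorm_def by (simp add: abs_minus_commute)

lemma supnorm_tri3: "supnorm ((a::'x::finite \<Rightarrow> real) - c) \<le> supnorm (a - b) + supnorm (b - c)"
proof (rule supnorm_le)
  fix x
  have "\<bar>(a - c) x\<bar> \<le> \<bar>(a - b) x\<bar> + \<bar>(b - c) x\<bar>" by simp
  then show "\<bar>(a - c) x\<bar> \<le> supnorm (a - b) + supnorm (b - c)"
    using supnorm_ge[of "a - b" x] supnorm_ge[of "b - c" x] by linarith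
qed

lemma sum_group_card:
  fixes xs :: "nat \<Rightarrow> 'x::finite" and F :: "'x \<Rightarrow> real"
  shows "(\<Sum>i\<in>{0..<n}. F (xs i)) = (\<Sum>x\<in>UNIV. real (card {i\<in>{0..<n}. xs i = x}) * F x)"
proof -
  have "(\<Sum>i\<in>{0..<n}. F (xs i)) = (\<Sum>x\<in>UNIV. \<Sum>i\<in>{i\<in>{0..<n}. xs i = x}. F (xs i))"
    by (rule sum.group[symmetric]) auto
  also have "\<dots> = (\<Sum>x\<in>UNIV. real (card {i\<in>{0..<n}. xs i = x}) * F x)"
    by (rule sum.cong) auto
  finally show ?thesis .
qed

lemma mf_avg:
  fixes xs :: "nat \<Rightarrow> 'x::finite" and F :: "'x \<Rightarrow> real"
  shows "(1 / real n) * (\<Sum>i\<in>{0..<n}. F (xs i)) = (\<Sum>x\<in>UNIV. mf n xs x * F x)"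
  unfolding sum_group_card mf_def by (simp add: sum_distrib_left)

lemma mf_in_Delta: "n > 0 \<Longrightarrow> in_Delta (mf n (xs :: nat \<Rightarrow> 'x::finite))"
  using mf_avg[of n "\<lambda>_. 1" xs] unfolding in_Delta_def by (auto simp: mf_def)

lemma Delta_I: "in_Delta (z::'x::finite \<Rightarrow> real) \<Longrightarrow> in_I z"
  unfolding in_Delta_def in_I_def
proof safe
  fix x assume "\<forall>x. 0 \<le> z x" "sum z UNIV = 1"
  then show "z x \<le> 1" using member_le_sum[of x UNIV z] by auto
qed auto

lemma if01_mult: "(if P then 1 else 0) * (c::real) = (if P then c else 0)" by simp

lemma mf_indicator: "mf n xs y = (1 / real n) * (\<Sum>i\<in>{0..<n}. if xs i = y then 1 else 0)"
proof -
  have "{i\<in>{0..<n}. xs i = y} = {0..<n} \<inter> {i. xs i = y}" by auto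
  then show ?thesis unfolding mf_def by (simp add: sum.If_cases)
qed

lemma tp_nonneg: "0 \<le> trans_prob f pw t y x u z"
  unfolding trans_prob_def by (auto intro: sum_nonneg)

lemma tp_sum: "(\<Sum>y\<in>UNIV. trans_prob f (pw :: nat \<Rightarrow> 'w::finite pmf) t y x u (z::'x::finite \<Rightarrow> real)) = (1::real)"
proof -
  have "(\<Sum>y\<in>UNIV. trans_prob f pw t y x u z) = (\<Sum>w\<in>UNIV. \<Sum>y\<in>UNIV. (if f t x u w z = y then 1 else 0) * pmf (pw t) w)"
    unfolding trans_prob_def by (rule sum.swap)
  also have "\<dots> = (\<Sum>w\<in>UNIV. pmf (pw t) w)"
    unfolding if01_mult by (simp add: sum.delta)
  also have "\<dots> = 1" by (rule sum_pmf_eq_1) auto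
  finally show ?thesis .
qed

lemma tp_le1: "trans_prob f (pw :: nat \<Rightarrow> 'w::finite pmf) t y x u (z::'x::finite \<Rightarrow> real) \<le> (1::real)"
proof -
  have "trans_prob f pw t y x u z \<le> (\<Sum>y\<in>UNIV. trans_prob f pw t y x u z)"
    by (rule member_le_sum) (auto simp: tp_nonneg)
  then show ?thesis by (simp add: tp_sum)
qed

lemma pmf_map_tp: "pmf (map_pmf (\<lambda>w. f t x u w z) (pw t)) y = trans_prob f (pw :: nat \<Rightarrow> 'w::finite pmf) t y x u z"
proof -
  have "pmf (map_pmf (\<lambda>w. f t x u w z) (pw t)) y = measure (pw t) {w. f t x u w z = y}"
    by (simp add: pmf_map vimage_def)
  also have "\<dots> = (\<Sum>w\<in>{w. f t x u w z = y}. pmf (pw t) w)"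
    by (simp add: measure_measure_pmf_finite)
  also have "\<dots> = trans_prob f pw t y x u z"
    unfolding trans_prob_def if01_mult by (simp add: sum.If_cases)
  finally show ?thesis .
qed
lemma hat_f_Delta:
  assumes "in_Delta z"
  shows "in_Delta (hat_f f (pw :: nat \<Rightarrow> 'w::finite pmf) t (z::'x::finite \<Rightarrow> real) \<gamma>)"
proof -
  have "(\<Sum>y\<in>UNIV. \<Sum>x\<in>UNIV. z x * trans_prob f pw t y x (\<gamma> x) z) = (\<Sum>x\<in>UNIV. \<Sum>y\<in>UNIV. z x * trans_prob f pw t y x (\<gamma> x) z)"
    by (rule sum.swap)
  also have "\<dots> = (\<Sum>x\<in>UNIV. z x)" by (simp add: sum_distrib_left[symmetric] tp_sum)
  finally show ?thesis using assms unfolding in_Delta_def hat_f_def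
    by (auto intro!: sum_nonneg mult_nonneg_nonneg tp_nonneg)
qed




lemma abs_prod_diff: "\<bar>(a::real) * b - c * d\<bar> \<le> \<bar>a - c\<bar> * \<bar>b\<bar> + \<bar>c\<bar> * \<bar>b - d\<bar>"
proof -
  have "a * b - c * d = (a - c) * b + c * (b - d)" by (simp add: algebra_simps)
  then show ?thesis by (metis abs_mult abs_triangle_ineq)
qed

lemma abs_prod_diff_le:
  assumes "\<bar>a - c\<bar> \<le> s" "\<bar>b\<bar> \<le> B" "0 \<le> c" "c \<le> 1" "\<bar>b - d\<bar> \<le> K * s" "0 \<le> s"
  shows "\<bar>(a::real) * b - c * d\<bar> \<le> (B + K) * s"
proof -
  have "\<bar>a - c\<bar> * \<bar>b\<bar> \<le> s * B" using assms by (intro mult_mono) auto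
  moreover have "\<bar>c\<bar> * \<bar>b - d\<bar> \<le> 1 * (K * s)" using assms by (intro mult_mono) auto
  ultimately show ?thesis using abs_prod_diff[of a b c d] by (simp add: algebra_simps)
qed

lemma Min_range_diff:
  fixes F G :: "'g::finite \<Rightarrow> real"
  assumes "\<And>g. \<bar>F g - G g\<bar> \<le> e"
  shows "\<bar>Min (range F) - Min (range G)\<bar> \<le> e"
proof -
  have "Min (range F) \<in> range F" by (rule Min_in) auto
  then obtain g1 where g1: "Min (range F) = F g1" by (metis imageE)
  have "Min (range G) \<in> range G" by (rule Min_in) auto
  then obtain g2 where g2: "Min (range G) = G g2" by (metis imageE)
  have "Min (range G) \<le> G g1" by (rule Min_le) auto
  moreover have "Min (range F) \<le> F g2" by (rule Min_le) auto
  ultimately show ?thesis using assms[of g1] assms[of g2] g1 g2 by linarith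
qed

locale mfc =
  fixes T :: nat
    and f :: "nat \<Rightarrow> 'x::finite \<Rightarrow> 'u::finite \<Rightarrow> 'w::finite \<Rightarrow> ('x \<Rightarrow> real) \<Rightarrow> 'x"
    and l :: "nat \<Rightarrow> 'x \<Rightarrow> 'u \<Rightarrow> ('x \<Rightarrow> real) \<Rightarrow> real"
    and pw :: "nat \<Rightarrow> 'w pmf"
    and K Bd :: real
  assumes K: "0 \<le> K" and Bd_nonneg: "0 \<le> Bd"
    and HP: "\<And>t x y u z1 z2. t \<in> {1..T} \<Longrightarrow> in_I z1 \<Longrightarrow> in_I z2 \<Longrightarrow>
       \<bar>trans_prob f pw t y x u z1 - trans_prob f pw t y x u z2\<bar> \<le> K * supnorm (z1 - z2)"
    and HL: "\<And>t x u z1 z2. t \<in> {1..T} \<Longrightarrow> in_I z1 \<Longrightarrow> in_I z2 \<Longrightarrow>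
       \<bar>l t x u z1 - l t x u z2\<bar> \<le> K * supnorm (z1 - z2)"
    and HB: "\<And>t x u z. t \<in> {1..T} \<Longrightarrow> in_I z \<Longrightarrow> \<bar>l t x u z\<bar> \<le> Bd"
begin

lemma Cc_nonneg: "0 \<le> real CARD('x) * (Bd + K)" using K Bd_nonneg by simp
lemma Cf_nonneg: "0 \<le> real CARD('x) * (1 + K)" using K by simp

lemma hat_c_lip:
  assumes t: "t \<in> {1..T}" and z: "in_Delta z1" "in_Delta z2"
  shows "\<bar>hat_c l t z1 \<gamma> - hat_c l t z2 \<gamma>\<bar> \<le> real CARD('x) * (Bd + K) * supnorm (z1 - z2)"
proof -
  let ?s = "supnorm (z1 - z2)"
  have I: "in_I z1" "in_I z2" using z by (auto intro: Delta_I)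
  have "\<bar>hat_c l t z1 \<gamma> - hat_c l t z2 \<gamma>\<bar> = \<bar>\<Sum>x\<in>UNIV. z1 x * l t x (\<gamma> x) z1 - z2 x * l t x (\<gamma> x) z2\<bar>"
    unfolding hat_c_def by (simp add: sum_subtractf)
  also have "\<dots> \<le> (\<Sum>x\<in>UNIV. \<bar>z1 x * l t x (\<gamma> x) z1 - z2 x * l t x (\<gamma> x) z2\<bar>)" by (rule sum_abs)
  also have "\<dots> \<le> (\<Sum>x\<in>(UNIV::'x set). (Bd + K) * ?s)"
  proof (rule sum_mono)
    fix x
    show "\<bar>z1 x * l t x (\<gamma> x) z1 - z2 x * l t x (\<gamma> x) z2\<bar> \<le> (Bd + K) * ?s"
      using supnorm_ge[of "z1 - z2" x] HB[OF t I(1)] HL[OF t I] I(2) supnorm_nonneg[of "z1 - z2"]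
      by (intro abs_prod_diff_le) (auto simp: in_I_def)
  qed
  finally show ?thesis by simp
qed

lemma hat_f_lip:
  assumes t: "t \<in> {1..T}" and z: "in_Delta z1" "in_Delta z2"
  shows "supnorm (hat_f f pw t z1 \<gamma> - hat_f f pw t z2 \<gamma>) \<le> real CARD('x) * (1 + K) * supnorm (z1 - z2)"
proof (rule supnorm_le)
  fix y
  let ?s = "supnorm (z1 - z2)"
  have I: "in_I z1" "in_I z2" using z by (auto intro: Delta_I)
  have "\<bar>(hat_f f pw t z1 \<gamma> - hat_f f pw t z2 \<gamma>) y\<bar>
     = \<bar>\<Sum>x\<in>UNIV. z1 x * trans_prob f pw t y x (\<gamma> x) z1 - z2 x * trans_prob f pw t y x (\<gamma> x) z2\<bar>"
    unfolding hat_f_def by (simp add: sum_subtractf)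
  also have "\<dots> \<le> (\<Sum>x\<in>UNIV. \<bar>z1 x * trans_prob f pw t y x (\<gamma> x) z1 - z2 x * trans_prob f pw t y x (\<gamma> x) z2\<bar>)"
    by (rule sum_abs)
  also have "\<dots> \<le> (\<Sum>x\<in>(UNIV::'x set). (1 + K) * ?s)"
  proof (rule sum_mono)
    fix x
    show "\<bar>z1 x * trans_prob f pw t y x (\<gamma> x) z1 - z2 x * trans_prob f pw t y x (\<gamma> x) z2\<bar> \<le> (1 + K) * ?s"
      using supnorm_ge[of "z1 - z2" x] HP[OF t I] I(2) supnorm_nonneg[of "z1 - z2"]
        tp_nonneg[of f pw t y x "\<gamma> x" z1] tp_le1[of f pw t y x "\<gamma> x" z1]
      by (intro abs_prod_diff_le) (auto simp: in_I_def)
  qed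
  finally show "\<bar>(hat_f f pw t z1 \<gamma> - hat_f f pw t z2 \<gamma>) y\<bar> \<le> real CARD('x) * (1 + K) * ?s" by (simp add: algebra_simps)
qed

lemma Wval_lip:
  "k \<le> T \<Longrightarrow> \<exists>L\<ge>0. \<forall>z1 z2. in_Delta z1 \<longrightarrow> in_Delta z2 \<longrightarrow>
      \<bar>Wval T f l pw k z1 - Wval T f l pw k z2\<bar> \<le> L * supnorm (z1 - z2)"
proof (induction k)
  case 0
  then show ?case by auto
next
  case (Suc k)
  have "k \<le> T" using Suc.prems by simp
  then obtain L where L0: "L \<ge> 0" and L1: "\<forall>z1 z2. in_Delta z1 \<longrightarrow> in_Delta z2 \<longrightarrow>
      \<bar>Wval T f l pw k z1 - Wval T f l pw k z2\<bar> \<le> L * supnorm (z1 - z2)" using Suc.IH by blast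
  have L: "L \<ge> 0" "\<And>z1 z2. in_Delta z1 \<Longrightarrow> in_Delta z2 \<Longrightarrow>
      \<bar>Wval T f l pw k z1 - Wval T f l pw k z2\<bar> \<le> L * supnorm (z1 - z2)" using L0 L1 by auto
  have t: "T - k \<in> {1..T}" using Suc.prems by auto
  show ?case
  proof (intro exI[of _ "real CARD('x) * (Bd + K) + L * (real CARD('x) * (1 + K))"] conjI allI impI)
    show "0 \<le> real CARD('x) * (Bd + K) + L * (real CARD('x) * (1 + K))" using L Cc_nonneg Cf_nonneg by simp
    fix z1 z2 :: "'x \<Rightarrow> real" assume z: "in_Delta z1" "in_Delta z2"
    show "\<bar>Wval T f l pw (Suc k) z1 - Wval T f l pw (Suc k) z2\<bar> \<le> (real CARD('x) * (Bd + K) + L * (real CARD('x) * (1 + K))) * supnorm (z1 - z2)"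
      unfolding Wval.simps
    proof (rule Min_range_diff)
      fix g
      have a: "\<bar>hat_c l (T - k) z1 g - hat_c l (T - k) z2 g\<bar> \<le> real CARD('x) * (Bd + K) * supnorm (z1 - z2)"
        by (rule hat_c_lip[OF t z])
      have "\<bar>Wval T f l pw k (hat_f f pw (T - k) z1 g) - Wval T f l pw k (hat_f f pw (T - k) z2 g)\<bar>
          \<le> L * supnorm (hat_f f pw (T - k) z1 g - hat_f f pw (T - k) z2 g)"
        using L(2) hat_f_Delta z by blast
      also have "\<dots> \<le> L * (real CARD('x) * (1 + K) * supnorm (z1 - z2))"
        by (intro mult_left_mono hat_f_lip[OF t z] L(1))
      finally show "\<bar>hat_c l (T - k) z1 g + Wval T f l pw k (hat_f f pw (T - k) z1 g) -
              (hat_c l (T - k) z2 g + Wval T f l pw k (hat_f f pw (T - k) z2 g))\<bar>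
          \<le> (real CARD('x) * (Bd + K) + L * (real CARD('x) * (1 + K))) * supnorm (z1 - z2)"
        using a abs_triangle_ineq[of "hat_c l (T - k) z1 g - hat_c l (T - k) z2 g"
           "Wval T f l pw k (hat_f f pw (T - k) z1 g) - Wval T f l pw k (hat_f f pw (T - k) z2 g)"]
        by (simp add: algebra_simps)
    qed
  qed
qed

end



lemma finite_Pi_set: "finite (set_pmf (Pi_pmf {0..<n} d (q :: nat \<Rightarrow> 'x::finite pmf)))"
  by (subst set_Pi_pmf) (auto intro!: finite_PiE_dflt)

lemma exp_ind: "measure_pmf.expectation (q::'x::finite pmf) (\<lambda>v. if v = y then 1 else 0) = pmf q y"
  by (subst integral_measure_pmf_real[of "{y}"]) (auto split: if_splits)

lemma exp_prod_ind:
  fixes q :: "nat \<Rightarrow> 'x::finite pmf"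
  assumes "B \<subseteq> {0..<n}"
  shows "measure_pmf.expectation (Pi_pmf {0..<n} d q) (\<lambda>ys. \<Prod>k\<in>B. (if ys k = y then 1 else 0))
        = (\<Prod>k\<in>B. pmf (q k) y)"
proof -
  let ?F = "\<lambda>k v. if k \<in> B then (if v = y then 1 else 0) else (1::real)"
  have eq1: "(\<Prod>k\<in>{0..<n}. ?F k (ys k)) = (\<Prod>k\<in>B. (if ys k = y then 1 else 0))" for ys
  proof -
    have "(\<Prod>k\<in>{0..<n}. ?F k (ys k)) = (\<Prod>k\<in>{0..<n} \<inter> {k. k \<in> B}. (if ys k = y then 1 else 0))"
      by (subst prod.If_cases) auto
    also have "{0..<n} \<inter> {k. k \<in> B} = B" using assms by auto
    finally show ?thesis .
  qed
  have "measure_pmf.expectation (Pi_pmf {0..<n} d q) (\<lambda>ys. \<Prod>k\<in>{0..<n}. ?F k (ys k))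
        = (\<Prod>k\<in>{0..<n}. measure_pmf.expectation (q k) (\<lambda>v. ?F k v))"
    by (rule expectation_prod_Pi_pmf) (auto intro: integrable_measure_pmf_finite)
  also have "\<dots> = (\<Prod>k\<in>{0..<n}. if k \<in> B then pmf (q k) y else 1)"
    by (rule prod.cong) (auto simp: exp_ind)
  also have "\<dots> = (\<Prod>k\<in>B. pmf (q k) y)"
  proof -
    have "(\<Prod>k\<in>{0..<n}. if k \<in> B then pmf (q k) y else 1) = (\<Prod>k\<in>{0..<n} \<inter> {k. k \<in> B}. pmf (q k) y)"
      by (subst prod.If_cases) auto
    also have "{0..<n} \<inter> {k. k \<in> B} = B" using assms by auto
    finally show ?thesis .
  qed
  finally show ?thesis using eq1 by simp
qed

lemma exp_abs_sq:
  fixes M :: "'a pmf" and g :: "'a \<Rightarrow> real"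
  assumes "finite (set_pmf M)"
  shows "measure_pmf.expectation M (\<lambda>a. \<bar>g a\<bar>) \<le> sqrt (measure_pmf.expectation M (\<lambda>a. (g a)^2))"
proof -
  let ?a = "measure_pmf.expectation M (\<lambda>a. \<bar>g a\<bar>)"
  have int: "integrable M h" for h :: "'a \<Rightarrow> real" using assms by (rule integrable_measure_pmf_finite)
  have "0 \<le> measure_pmf.expectation M (\<lambda>a. (\<bar>g a\<bar> - ?a)^2)" by simp
  also have "(\<lambda>a. (\<bar>g a\<bar> - ?a)^2) = (\<lambda>a. (g a)^2 - 2 * ?a * \<bar>g a\<bar> + ?a^2)"
    by (auto simp: power2_eq_square algebra_simps)
  also have "measure_pmf.expectation M \<dots> = measure_pmf.expectation M (\<lambda>a. (g a)^2) - 2 * ?a * ?a + ?a^2"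
    by (simp add: int Bochner_Integration.integral_diff Bochner_Integration.integral_add)
  finally have "?a^2 \<le> measure_pmf.expectation M (\<lambda>a. (g a)^2)" by (simp add: power2_eq_square)
  then show ?thesis by (simp add: real_le_rsqrt)
qed

lemma conc:
  fixes q :: "nat \<Rightarrow> 'x::finite pmf"
  assumes n: "n > 0"
  shows "measure_pmf.expectation (Pi_pmf {0..<n} d q)
           (\<lambda>ys. \<bar>mf n ys y - (1 / real n) * (\<Sum>i\<in>{0..<n}. pmf (q i) y)\<bar>) \<le> 1 / sqrt (real n)"
proof -
  let ?P = "Pi_pmf {0..<n} d q"
  define I where "I i ys = (if ys i = y then 1 else (0::real))" for i and ys :: "nat \<Rightarrow> 'x"
  define p where "p i = pmf (q i) y" for i
  define Y where "Y i ys = I i ys - p i" for i ys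
  define S where "S ys = (\<Sum>i\<in>{0..<n}. Y i ys)" for ys
  have int: "integrable ?P h" for h :: "_ \<Rightarrow> real" by (rule integrable_measure_pmf_finite[OF finite_Pi_set])
  have e1: "measure_pmf.expectation ?P (I i) = p i" if "i \<in> {0..<n}" for i
    using exp_prod_ind[of "{i}" n d q y] that unfolding I_def p_def by simp
  have e2: "measure_pmf.expectation ?P (\<lambda>ys. I i ys * I j ys) = p i * p j"
    if "i \<in> {0..<n}" "j \<in> {0..<n}" "i \<noteq> j" for i j
    using exp_prod_ind[of "{i,j}" n d q y] that unfolding I_def p_def by simp
  have e3: "measure_pmf.expectation ?P (\<lambda>ys. Y i ys * Y j ys) = 0"
    if "i \<in> {0..<n}" "j \<in> {0..<n}" "i \<noteq> j" for i j
  proof -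
    have "(\<lambda>ys. Y i ys * Y j ys) = (\<lambda>ys. I i ys * I j ys - p j * I i ys - p i * I j ys + p i * p j)"
      unfolding Y_def by (auto simp: algebra_simps)
    then have "measure_pmf.expectation ?P (\<lambda>ys. Y i ys * Y j ys)
       = measure_pmf.expectation ?P (\<lambda>ys. I i ys * I j ys) - p j * measure_pmf.expectation ?P (I i)
         - p i * measure_pmf.expectation ?P (I j) + p i * p j"
      by (simp add: int Bochner_Integration.integral_diff Bochner_Integration.integral_add)
    then show ?thesis using e1 e2 that by simp
  qed
  have e4: "measure_pmf.expectation ?P (\<lambda>ys. Y i ys * Y i ys) \<le> 1" for i
  proof -
    have p01: "0 \<le> p i" "p i \<le> 1" unfolding p_def by (auto simp: pmf_le_1)
    have "\<bar>Y i ys\<bar> \<le> 1" for ys using p01 unfolding Y_def I_def by auto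
    then have "Y i ys * Y i ys \<le> 1" for ys
      by (metis abs_le_square_iff abs_one mult.right_neutral power2_eq_square)
    then have "measure_pmf.expectation ?P (\<lambda>ys. Y i ys * Y i ys) \<le> measure_pmf.expectation ?P (\<lambda>_. 1)"
      by (intro integral_mono int) auto
    then show ?thesis by simp
  qed
  have "measure_pmf.expectation ?P (\<lambda>ys. (S ys)^2)
      = measure_pmf.expectation ?P (\<lambda>ys. \<Sum>i\<in>{0..<n}. \<Sum>j\<in>{0..<n}. Y i ys * Y j ys)"
    unfolding S_def power2_eq_square sum_product by simp
  also have "\<dots> = (\<Sum>i\<in>{0..<n}. \<Sum>j\<in>{0..<n}. measure_pmf.expectation ?P (\<lambda>ys. Y i ys * Y j ys))"
    by (simp add: int Bochner_Integration.integral_sum)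
  also have "\<dots> = (\<Sum>i\<in>{0..<n}. measure_pmf.expectation ?P (\<lambda>ys. Y i ys * Y i ys))"
  proof (rule sum.cong[OF refl])
    fix i assume i: "i \<in> {0..<n}"
    have "(\<Sum>j\<in>{0..<n}. measure_pmf.expectation ?P (\<lambda>ys. Y i ys * Y j ys))
        = (\<Sum>j\<in>{0..<n}. if j = i then measure_pmf.expectation ?P (\<lambda>ys. Y i ys * Y i ys) else 0)"
      using e3 i by (intro sum.cong) auto
    also have "\<dots> = measure_pmf.expectation ?P (\<lambda>ys. Y i ys * Y i ys)"
      using i by (simp add: sum.delta')
    finally show "(\<Sum>j\<in>{0..<n}. measure_pmf.expectation ?P (\<lambda>ys. Y i ys * Y j ys))
        = measure_pmf.expectation ?P (\<lambda>ys. Y i ys * Y i ys)" .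
  qed
  also have "\<dots> \<le> (\<Sum>i\<in>{0..<n}. 1)" by (rule sum_mono) (rule e4)
  finally have sq: "measure_pmf.expectation ?P (\<lambda>ys. (S ys)^2) \<le> real n" by simp
  have diff: "mf n ys y - (1 / real n) * (\<Sum>i\<in>{0..<n}. pmf (q i) y) = (1 / real n) * S ys" for ys
    unfolding mf_indicator S_def Y_def I_def p_def by (simp add: sum_subtractf algebra_simps)
  have "measure_pmf.expectation ?P (\<lambda>ys. \<bar>mf n ys y - (1 / real n) * (\<Sum>i\<in>{0..<n}. pmf (q i) y)\<bar>)
      = (1 / real n) * measure_pmf.expectation ?P (\<lambda>ys. \<bar>S ys\<bar>)"
    unfolding diff by (simp add: abs_mult)
  also have "\<dots> \<le> (1 / real n) * sqrt (real n)"
    using exp_abs_sq[OF finite_Pi_set, of n d q S] sq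
    by (intro mult_left_mono) (auto intro: order_trans)
  also have "\<dots> = 1 / sqrt (real n)" using n by (simp add: field_simps real_div_sqrt)
  finally show ?thesis .
qed

lemma conc_sup:
  fixes q :: "nat \<Rightarrow> 'x::finite pmf"
  assumes n: "n > 0"
  shows "measure_pmf.expectation (Pi_pmf {0..<n} d q)
           (\<lambda>ys. supnorm (mf n ys - (\<lambda>y. (1 / real n) * (\<Sum>i\<in>{0..<n}. pmf (q i) y)))) \<le> real CARD('x) / sqrt (real n)"
proof -
  let ?P = "Pi_pmf {0..<n} d q"
  have int: "integrable ?P h" for h :: "_ \<Rightarrow> real" by (rule integrable_measure_pmf_finite[OF finite_Pi_set])
  have "measure_pmf.expectation ?P (\<lambda>ys. supnorm (mf n ys - (\<lambda>y. (1 / real n) * (\<Sum>i\<in>{0..<n}. pmf (q i) y))))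
     \<le> measure_pmf.expectation ?P (\<lambda>ys. \<Sum>y\<in>UNIV. \<bar>mf n ys y - (1 / real n) * (\<Sum>i\<in>{0..<n}. pmf (q i) y)\<bar>)"
    by (intro integral_mono int) (metis (no_types, lifting) fun_diff_def supnorm_le_sum sum.cong)
  also have "\<dots> = (\<Sum>y\<in>UNIV. measure_pmf.expectation ?P (\<lambda>ys. \<bar>mf n ys y - (1 / real n) * (\<Sum>i\<in>{0..<n}. pmf (q i) y)\<bar>))"
    by (simp add: int Bochner_Integration.integral_sum)
  also have "\<dots> \<le> (\<Sum>y\<in>(UNIV::'x set). 1 / sqrt (real n))"
    by (rule sum_mono) (rule conc[OF n])
  finally show ?thesis by simp
qed




lemma finite_sd: "finite (set_pmf (state_dist (f :: nat \<Rightarrow> 'x::finite \<Rightarrow> 'u \<Rightarrow> 'w \<Rightarrow> ('x \<Rightarrow> real) \<Rightarrow> 'x) p0 pw n h k))"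
  by (induction k) (auto simp: finite_Pi_set)

lemma exp_bind:
  fixes H :: "'b \<Rightarrow> real"
  assumes "finite (set_pmf p)" "\<And>a. finite (set_pmf (g a))"
  shows "measure_pmf.expectation (bind_pmf p g) H = measure_pmf.expectation p (\<lambda>a. measure_pmf.expectation (g a) H)"
proof -
  have "measure_pmf.expectation (bind_pmf p g) H = (\<Sum>a\<in>set_pmf p. pmf p a *\<^sub>R measure_pmf.expectation (g a) H)"
    by (rule pmf_expectation_bind) (use assms in auto)
  also have "\<dots> = measure_pmf.expectation p (\<lambda>a. measure_pmf.expectation (g a) H)"
    by (subst integral_measure_pmf_real[OF assms(1)]) (auto simp: mult.commute)
  finally show ?thesis .
qed

lemma trans_err:
  fixes f :: "nat \<Rightarrow> 'x::finite \<Rightarrow> 'u \<Rightarrow> 'w::finite \<Rightarrow> ('x \<Rightarrow> real) \<Rightarrow> 'x"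
  assumes n: "n > 0"
  shows "measure_pmf.expectation
     (Pi_pmf {0..<n} d (\<lambda>i. map_pmf (\<lambda>w. f t (xs i) (\<gamma> (xs i)) w (mf n xs)) (pw t)))
     (\<lambda>ys. supnorm (mf n ys - hat_f f pw t (mf n xs) \<gamma>)) \<le> real CARD('x) / sqrt (real n)"
proof -
  have "(\<lambda>y. (1 / real n) * (\<Sum>i\<in>{0..<n}. pmf (map_pmf (\<lambda>w. f t (xs i) (\<gamma> (xs i)) w (mf n xs)) (pw t)) y))
        = hat_f f pw t (mf n xs) \<gamma>"
    unfolding pmf_map_tp hat_f_def by (rule ext) (rule mf_avg)
  then show ?thesis using conc_sup[OF n, of d "\<lambda>i. map_pmf (\<lambda>w. f t (xs i) (\<gamma> (xs i)) w (mf n xs)) (pw t)"]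
    by simp
qed

lemma init_err:
  fixes p0 :: "'x::finite pmf"
  assumes n: "n > 0"
  shows "measure_pmf.expectation (Pi_pmf {0..<n} d (\<lambda>_. p0))
     (\<lambda>ys. supnorm (mf n ys - (\<lambda>y. pmf p0 y))) \<le> real CARD('x) / sqrt (real n)"
  using conc_sup[OF n, of d "\<lambda>_. p0"] n by simp

lemma cost_avg:
  "(1 / real n) * (\<Sum>i\<in>{0..<n}. l t (xs i) (h t (xs i) (mf n xs)) (mf n xs))
    = hat_c l t (mf n (xs :: nat \<Rightarrow> 'x::finite)) (\<lambda>x. h t x (mf n xs))"
  unfolding hat_c_def by (rule mf_avg)

lemma p0_Delta: "in_Delta (\<lambda>x. pmf (p0 :: 'x::finite pmf) x)"
  unfolding in_Delta_def by (auto intro: sum_pmf_eq_1)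

lemma Jcost_shift: "(\<Sum>t\<in>{1..(N::nat)}. F (t - 1)) = (\<Sum>i<N. (F i :: real))"
  by (induction N) auto

fun Aseq :: "real \<Rightarrow> real \<Rightarrow> nat \<Rightarrow> real" where
  "Aseq c C 0 = c"
| "Aseq c C (Suc k) = c + C * Aseq c C k"




context mfc begin

lemma Vhat_step:
  assumes t: "t \<in> {1..T}"
  shows "Vhat T f l pw t z \<le> hat_c l t z \<gamma> + Vhat T f l pw (t + 1) (hat_f f pw t z \<gamma>)"
proof -
  have e1: "T + 1 - t = Suc (T - t)" and e2: "T - (T - t) = t" and e3: "T + 1 - (t + 1) = T - t"
    using t by auto
  show ?thesis unfolding Vhat_def e1 e3 Wval.simps e2 by (rule Min_le) auto
qed

lemma Vhat_end: "Vhat T f l pw (Suc T) z = 0"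
  unfolding Vhat_def by simp

lemma Vhat_lip_unif:
  "\<exists>L\<ge>0. \<forall>t\<in>{1..T+1}. \<forall>z1 z2. in_Delta z1 \<longrightarrow> in_Delta z2 \<longrightarrow>
     \<bar>Vhat T f l pw t z1 - Vhat T f l pw t z2\<bar> \<le> L * supnorm (z1 - z2)"
proof -
  have "\<forall>k\<in>{..T}. \<exists>L. L \<ge> 0 \<and> (\<forall>z1 z2. in_Delta z1 \<longrightarrow> in_Delta z2 \<longrightarrow>
      \<bar>Wval T f l pw k z1 - Wval T f l pw k z2\<bar> \<le> L * supnorm (z1 - z2))"
    using Wval_lip by auto
  then obtain Lf where Lf: "\<And>k. k \<in> {..T} \<Longrightarrow> Lf k \<ge> 0 \<and> (\<forall>z1 z2. in_Delta z1 \<longrightarrow> in_Delta z2 \<longrightarrow>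
      \<bar>Wval T f l pw k z1 - Wval T f l pw k z2\<bar> \<le> Lf k * supnorm (z1 - z2))"
    by metis
  define L where "L = (\<Sum>k\<in>{..T}. Lf k)"
  have Lk: "Lf k \<le> L" if "k \<le> T" for k
    unfolding L_def using that Lf by (intro member_le_sum) auto
  show ?thesis
  proof (intro exI[of _ L] conjI ballI allI impI)
    show "0 \<le> L" unfolding L_def using Lf by (intro sum_nonneg) auto
    fix t and z1 z2 :: "'x \<Rightarrow> real" assume t: "t \<in> {1..T+1}" and z: "in_Delta z1" "in_Delta z2"
    have k: "T + 1 - t \<le> T" using t by auto
    have "\<bar>Vhat T f l pw t z1 - Vhat T f l pw t z2\<bar> \<le> Lf (T + 1 - t) * supnorm (z1 - z2)"
      unfolding Vhat_def using Lf[of "T + 1 - t"] k z by auto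
    also have "\<dots> \<le> L * supnorm (z1 - z2)"
      using Lk[OF k] supnorm_nonneg by (rule mult_right_mono)
    finally show "\<bar>Vhat T f l pw t z1 - Vhat T f l pw t z2\<bar> \<le> L * supnorm (z1 - z2)" .
  qed
qed


lemma lower:
  assumes n: "n > 0" and L0: "L \<ge> 0"
    and LV: "\<forall>t\<in>{1..T+1}. \<forall>z1 z2. in_Delta z1 \<longrightarrow> in_Delta z2 \<longrightarrow>
     \<bar>Vhat T f l pw t z1 - Vhat T f l pw t z2\<bar> \<le> L * supnorm (z1 - z2)"
  shows "Vhat T f l pw 1 (\<lambda>x. pmf p0 x) \<le> Jcost T f l p0 pw n h + real (T + 1) * (L * real CARD('x) / sqrt (real n))"
proof -
  define S where "S k = state_dist f p0 pw n h k" for k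
  define e where "e = L * real CARD('x) / sqrt (real n)"
  define cf where "cf k xs = (1 / real n) * (\<Sum>i\<in>{0..<n}. l (Suc k) (xs i) (h (Suc k) (xs i) (mf n xs)) (mf n xs))" for k xs
  define Q where "Q k xs = Pi_pmf {0..<n} undefined (\<lambda>i.
         map_pmf (\<lambda>w. f (Suc k) (xs i) (h (Suc k) (xs i) (mf n xs)) w (mf n xs)) (pw (Suc k)))" for k xs
  have SS: "S (Suc k) = bind_pmf (S k) (Q k)" for k unfolding S_def Q_def by simp
  have intS: "integrable (measure_pmf (S k)) g" for k and g :: "_ \<Rightarrow> real"
    unfolding S_def by (rule integrable_measure_pmf_finite[OF finite_sd])
  have intQ: "integrable (measure_pmf (Q k xs)) g" for k xs and g :: "_ \<Rightarrow> real"
    unfolding Q_def by (rule integrable_measure_pmf_finite[OF finite_Pi_set])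
  have Dm: "in_Delta (mf n xs)" for xs :: "nat \<Rightarrow> 'x" using n by (rule mf_in_Delta)
  have Vlip: "Vhat T f l pw t z1 \<le> Vhat T f l pw t z2 + L * supnorm (z2 - z1)"
    if "t \<in> {1..T+1}" "in_Delta z1" "in_Delta z2" for t z1 z2
    using LV that supnorm_minus_sym[of z1 z2] by fastforce
  have claim: "Vhat T f l pw 1 (\<lambda>x. pmf p0 x) \<le> (\<Sum>i<k. measure_pmf.expectation (S i) (cf i))
      + measure_pmf.expectation (S k) (\<lambda>xs. Vhat T f l pw (Suc k) (mf n xs)) + real (Suc k) * e"
    if "k \<le> T" for k
    using that
  proof (induction k)
    case 0
    have "Vhat T f l pw 1 (\<lambda>x. pmf p0 x) = measure_pmf.expectation (S 0) (\<lambda>_. Vhat T f l pw 1 (\<lambda>x. pmf p0 x))"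
      by simp
    also have "\<dots> \<le> measure_pmf.expectation (S 0) (\<lambda>xs. Vhat T f l pw 1 (mf n xs) + L * supnorm (mf n xs - (\<lambda>x. pmf p0 x)))"
      by (intro integral_mono intS Vlip p0_Delta Dm) auto
    also have "\<dots> = measure_pmf.expectation (S 0) (\<lambda>xs. Vhat T f l pw 1 (mf n xs))
        + L * measure_pmf.expectation (S 0) (\<lambda>xs. supnorm (mf n xs - (\<lambda>x. pmf p0 x)))"
      by (simp add: intS)
    also have "\<dots> \<le> measure_pmf.expectation (S 0) (\<lambda>xs. Vhat T f l pw 1 (mf n xs)) + L * (real CARD('x) / sqrt (real n))"
      using init_err[OF n, of undefined p0] L0 unfolding S_def by (intro add_left_mono mult_left_mono) auto
    finally show ?case by (simp add: e_def)
  next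
    case (Suc k)
    have t: "Suc k \<in> {1..T}" using Suc.prems by auto
    have pw_bound: "Vhat T f l pw (Suc k) (mf n xs) \<le> cf k xs
        + measure_pmf.expectation (Q k xs) (\<lambda>ys. Vhat T f l pw (Suc (Suc k)) (mf n ys)) + e" for xs
    proof -
      define \<gamma> where "\<gamma> = (\<lambda>x. h (Suc k) x (mf n xs))"
      define F where "F = hat_f f pw (Suc k) (mf n xs) \<gamma>"
      have FD: "in_Delta F" unfolding F_def by (rule hat_f_Delta[OF Dm])
      have "Vhat T f l pw (Suc k) (mf n xs) \<le> hat_c l (Suc k) (mf n xs) \<gamma> + Vhat T f l pw (Suc (Suc k)) F"
        using Vhat_step[OF t, of "mf n xs" \<gamma>] unfolding F_def by simp
      also have "hat_c l (Suc k) (mf n xs) \<gamma> = cf k xs"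
        unfolding cf_def \<gamma>_def by (rule cost_avg[symmetric])
      also have "Vhat T f l pw (Suc (Suc k)) F = measure_pmf.expectation (Q k xs) (\<lambda>_. Vhat T f l pw (Suc (Suc k)) F)"
        by simp
      also have "\<dots> \<le> measure_pmf.expectation (Q k xs) (\<lambda>ys. Vhat T f l pw (Suc (Suc k)) (mf n ys) + L * supnorm (mf n ys - F))"
        using Suc.prems by (intro integral_mono intQ Vlip FD Dm) auto
      also have "\<dots> = measure_pmf.expectation (Q k xs) (\<lambda>ys. Vhat T f l pw (Suc (Suc k)) (mf n ys))
          + L * measure_pmf.expectation (Q k xs) (\<lambda>ys. supnorm (mf n ys - F))"
        by (simp add: intQ)
      also have "measure_pmf.expectation (Q k xs) (\<lambda>ys. supnorm (mf n ys - F)) \<le> real CARD('x) / sqrt (real n)"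
        unfolding Q_def F_def \<gamma>_def using trans_err[OF n, of undefined f "Suc k" xs "\<lambda>x. h (Suc k) x (mf n xs)" pw]
        by simp
      finally show ?thesis using L0 unfolding e_def by (simp add: mult_left_mono)
    qed
    have "measure_pmf.expectation (S k) (\<lambda>xs. Vhat T f l pw (Suc k) (mf n xs))
        \<le> measure_pmf.expectation (S k) (\<lambda>xs. cf k xs
          + measure_pmf.expectation (Q k xs) (\<lambda>ys. Vhat T f l pw (Suc (Suc k)) (mf n ys)) + e)"
      by (intro integral_mono intS pw_bound)
    also have "\<dots> = measure_pmf.expectation (S k) (cf k)
          + measure_pmf.expectation (S k) (\<lambda>xs. measure_pmf.expectation (Q k xs) (\<lambda>ys. Vhat T f l pw (Suc (Suc k)) (mf n ys))) + e"
      by (simp add: intS)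
    also have "measure_pmf.expectation (S k) (\<lambda>xs. measure_pmf.expectation (Q k xs) (\<lambda>ys. Vhat T f l pw (Suc (Suc k)) (mf n ys)))
        = measure_pmf.expectation (S (Suc k)) (\<lambda>ys. Vhat T f l pw (Suc (Suc k)) (mf n ys))"
      unfolding SS by (rule exp_bind[symmetric]) (auto simp: S_def Q_def finite_sd finite_Pi_set)
    finally have step: "measure_pmf.expectation (S k) (\<lambda>xs. Vhat T f l pw (Suc k) (mf n xs))
       \<le> measure_pmf.expectation (S k) (cf k) + measure_pmf.expectation (S (Suc k)) (\<lambda>ys. Vhat T f l pw (Suc (Suc k)) (mf n ys)) + e" .
    have "k \<le> T" using Suc.prems by simp
    from Suc.IH[OF this] step show ?case by (simp add: algebra_simps)
  qed
  have "Jcost T f l p0 pw n h = (\<Sum>t\<in>{1..T}. measure_pmf.expectation (S (t - 1)) (cf (t - 1)))"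
    unfolding Jcost_def S_def cf_def by (intro sum.cong) auto
  also have "\<dots> = (\<Sum>i<T. measure_pmf.expectation (S i) (cf i))"
    by (rule Jcost_shift)
  finally have J: "Jcost T f l p0 pw n h = (\<Sum>i<T. measure_pmf.expectation (S i) (cf i))" .
  show ?thesis using claim[of T] unfolding J e_def by (simp add: Vhat_end)
qed


lemma ztraj_Delta: "in_Delta (ztraj f p0 pw \<psi> k)"
  by (induction k) (auto intro: hat_f_Delta p0_Delta)

lemma upper:
  assumes n: "n > 0"
    and psi_min: "\<And>t z. t \<in> {1..T} \<Longrightarrow> in_Delta z \<Longrightarrow>
                 hat_c l t z (\<psi> t z) + Vhat T f l pw (t + 1) (hat_f f pw t z (\<psi> t z))
                   = Vhat T f l pw t z"
  shows "Jcost T f l p0 pw n (\<lambda>t x m. \<psi> t (ztraj f p0 pw \<psi> (t - 1)) x)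
     \<le> Vhat T f l pw 1 (\<lambda>x. pmf p0 x)
       + real CARD('x) * (Bd + K) * (\<Sum>i<T. Aseq (real CARD('x)) (real CARD('x) * (1 + K)) i) / sqrt (real n)"
proof -
  define h where "h = (\<lambda>t x (m::'x \<Rightarrow> real). \<psi> t (ztraj f p0 pw \<psi> (t - 1)) x)"
  define z where "z k = ztraj f p0 pw \<psi> k" for k
  define \<gamma> where "\<gamma> k = \<psi> (Suc k) (z k)" for k
  define A where "A k = Aseq (real CARD('x)) (real CARD('x) * (1 + K)) k" for k
  define S where "S k = state_dist f p0 pw n h k" for k
  define cf where "cf k xs = (1 / real n) * (\<Sum>i\<in>{0..<n}. l (Suc k) (xs i) (h (Suc k) (xs i) (mf n xs)) (mf n xs))" for k xs
  define Q where "Q k xs = Pi_pmf {0..<n} undefined (\<lambda>i.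
         map_pmf (\<lambda>w. f (Suc k) (xs i) (\<gamma> k (xs i)) w (mf n xs)) (pw (Suc k)))" for k xs
  have hS: "h (Suc k) x m = \<gamma> k x" for k x m unfolding h_def \<gamma>_def z_def by simp
  have SS: "S (Suc k) = bind_pmf (S k) (Q k)" for k unfolding S_def Q_def by (simp add: hS)
  have intS: "integrable (measure_pmf (S k)) g" for k and g :: "_ \<Rightarrow> real"
    unfolding S_def by (rule integrable_measure_pmf_finite[OF finite_sd])
  have intQ: "integrable (measure_pmf (Q k xs)) g" for k xs and g :: "_ \<Rightarrow> real"
    unfolding Q_def by (rule integrable_measure_pmf_finite[OF finite_Pi_set])
  have Dm: "in_Delta (mf n xs)" for xs :: "nat \<Rightarrow> 'x" using n by (rule mf_in_Delta)
  have Dz: "in_Delta (z k)" for k unfolding z_def by (rule ztraj_Delta)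
  have zS: "z (Suc k) = hat_f f pw (Suc k) (z k) (\<gamma> k)" for k unfolding z_def \<gamma>_def by simp
  have A_nonneg: "0 \<le> A k" for k unfolding A_def using K by (induction k) auto
  have Dk: "measure_pmf.expectation (S k) (\<lambda>xs. supnorm (mf n xs - z k)) \<le> A k / sqrt (real n)"
    if "k \<le> T" for k
    using that
  proof (induction k)
    case 0
    have "z 0 = (\<lambda>y. pmf p0 y)" unfolding z_def by simp
    then show ?case using init_err[OF n, of undefined p0] unfolding S_def A_def by (simp add: fun_diff_def)
  next
    case (Suc k)
    have t: "Suc k \<in> {1..T}" using Suc.prems by auto
    have pb: "measure_pmf.expectation (Q k xs) (\<lambda>ys. supnorm (mf n ys - z (Suc k)))
        \<le> real CARD('x) / sqrt (real n) + real CARD('x) * (1 + K) * supnorm (mf n xs - z k)" for xs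
    proof -
      define F where "F = hat_f f pw (Suc k) (mf n xs) (\<gamma> k)"
      have "measure_pmf.expectation (Q k xs) (\<lambda>ys. supnorm (mf n ys - z (Suc k)))
         \<le> measure_pmf.expectation (Q k xs) (\<lambda>ys. supnorm (mf n ys - F) + supnorm (F - z (Suc k)))"
        by (intro integral_mono intQ supnorm_tri3)
      also have "\<dots> = measure_pmf.expectation (Q k xs) (\<lambda>ys. supnorm (mf n ys - F)) + supnorm (F - z (Suc k))"
        by (simp add: intQ)
      also have "measure_pmf.expectation (Q k xs) (\<lambda>ys. supnorm (mf n ys - F)) \<le> real CARD('x) / sqrt (real n)"
        unfolding Q_def F_def using trans_err[OF n, of undefined f "Suc k" xs "\<gamma> k" pw] by simp
      also have "supnorm (F - z (Suc k)) \<le> real CARD('x) * (1 + K) * supnorm (mf n xs - z k)"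
        unfolding F_def zS by (rule hat_f_lip[OF t Dm Dz])
      finally show ?thesis by simp
    qed
    have "measure_pmf.expectation (S (Suc k)) (\<lambda>ys. supnorm (mf n ys - z (Suc k)))
        = measure_pmf.expectation (S k) (\<lambda>xs. measure_pmf.expectation (Q k xs) (\<lambda>ys. supnorm (mf n ys - z (Suc k))))"
      unfolding SS by (rule exp_bind) (auto simp: S_def Q_def finite_sd finite_Pi_set)
    also have "\<dots> \<le> measure_pmf.expectation (S k) (\<lambda>xs. real CARD('x) / sqrt (real n) + real CARD('x) * (1 + K) * supnorm (mf n xs - z k))"
      by (intro integral_mono intS pb)
    also have "\<dots> = real CARD('x) / sqrt (real n) + real CARD('x) * (1 + K) * measure_pmf.expectation (S k) (\<lambda>xs. supnorm (mf n xs - z k))"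
      by (simp add: intS)
    also have "\<dots> \<le> real CARD('x) / sqrt (real n) + real CARD('x) * (1 + K) * (A k / sqrt (real n))"
      by (intro add_left_mono mult_left_mono) (use Suc.IH Suc.prems Cf_nonneg in \<open>auto simp: fun_diff_def\<close>)
    also have "\<dots> = A (Suc k) / sqrt (real n)" unfolding A_def by (simp add: add_divide_distrib)
    finally show ?case .
  qed
  have tele: "Vhat T f l pw 1 (z 0) = (\<Sum>i<k. hat_c l (Suc i) (z i) (\<gamma> i)) + Vhat T f l pw (Suc k) (z k)"
    if "k \<le> T" for k
    using that
  proof (induction k)
    case 0 then show ?case by simp
  next
    case (Suc k)
    have t: "Suc k \<in> {1..T}" using Suc.prems by auto
    have "Vhat T f l pw (Suc k) (z k) = hat_c l (Suc k) (z k) (\<gamma> k) + Vhat T f l pw (Suc (Suc k)) (z (Suc k))"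
      using psi_min[OF t Dz[of k]] unfolding zS \<gamma>_def by simp
    then show ?case using Suc by simp
  qed
  have cb: "measure_pmf.expectation (S i) (cf i) \<le> hat_c l (Suc i) (z i) (\<gamma> i) + real CARD('x) * (Bd + K) * (A i / sqrt (real n))"
    if "i < T" for i
  proof -
    have t: "Suc i \<in> {1..T}" using that by auto
    have "cf i xs = hat_c l (Suc i) (mf n xs) (\<gamma> i)" for xs
      unfolding cf_def using cost_avg[of n l "Suc i" xs h] by (simp add: hS)
    then have "measure_pmf.expectation (S i) (cf i) = measure_pmf.expectation (S i) (\<lambda>xs. hat_c l (Suc i) (mf n xs) (\<gamma> i))"
      by presburger
    also have "\<dots> \<le> measure_pmf.expectation (S i) (\<lambda>xs. hat_c l (Suc i) (z i) (\<gamma> i) + real CARD('x) * (Bd + K) * supnorm (mf n xs - z i))"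
    proof (intro integral_mono intS)
      fix xs
      show "hat_c l (Suc i) (mf n xs) (\<gamma> i) \<le> hat_c l (Suc i) (z i) (\<gamma> i) + real CARD('x) * (Bd + K) * supnorm (mf n xs - z i)"
        using hat_c_lip[OF t Dm[of xs] Dz[of i], of "\<gamma> i"] by linarith
    qed
    also have "\<dots> = hat_c l (Suc i) (z i) (\<gamma> i) + real CARD('x) * (Bd + K) * measure_pmf.expectation (S i) (\<lambda>xs. supnorm (mf n xs - z i))"
      by (simp add: intS)
    also have "\<dots> \<le> hat_c l (Suc i) (z i) (\<gamma> i) + real CARD('x) * (Bd + K) * (A i / sqrt (real n))"
      using Dk[of i] that Cc_nonneg by (intro add_left_mono mult_left_mono) auto
    finally show ?thesis .
  qed
  have "Jcost T f l p0 pw n h = (\<Sum>t\<in>{1..T}. measure_pmf.expectation (S (t - 1)) (cf (t - 1)))"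
    unfolding Jcost_def S_def cf_def by (intro sum.cong) auto
  also have "\<dots> = (\<Sum>i<T. measure_pmf.expectation (S i) (cf i))"
    by (rule Jcost_shift)
  also have "\<dots> \<le> (\<Sum>i<T. hat_c l (Suc i) (z i) (\<gamma> i) + real CARD('x) * (Bd + K) * (A i / sqrt (real n)))"
    by (intro sum_mono cb) auto
  also have "\<dots> = Vhat T f l pw 1 (z 0) + real CARD('x) * (Bd + K) * (\<Sum>i<T. A i) / sqrt (real n)"
    using tele[of T] by (simp add: Vhat_end sum.distrib sum_distrib_left sum_divide_distrib)
  finally show ?thesis unfolding h_def z_def A_def by simp
qed

end



theorem theorem1:
  fixes T :: nat
    and f :: "nat \<Rightarrow> 'x::finite \<Rightarrow> 'u::finite \<Rightarrow> 'w::finite \<Rightarrow> ('x \<Rightarrow> real) \<Rightarrow> 'x"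
    and l :: "nat \<Rightarrow> 'x \<Rightarrow> 'u \<Rightarrow> ('x \<Rightarrow> real) \<Rightarrow> real"
    and p0 :: "'x pmf"
    and pw :: "nat \<Rightarrow> 'w pmf"
    and \<psi> :: "nat \<Rightarrow> ('x \<Rightarrow> real) \<Rightarrow> ('x \<Rightarrow> 'u)"
  assumes cost_nonneg: "\<And>t x u z. in_I z \<Longrightarrow> 0 \<le> l t x u z"
    and lip_P: "\<forall>t\<in>{1..T}. \<exists>K>0. \<forall>x y u z1 z2. in_I z1 \<longrightarrow> in_I z2 \<longrightarrow>
                 \<bar>trans_prob f pw t y x u z1 - trans_prob f pw t y x u z2\<bar> \<le> K * supnorm (z1 - z2)"
    and lip_l: "\<forall>t\<in>{1..T}. \<exists>K>0. \<forall>x u z1 z2. in_I z1 \<longrightarrow> in_I z2 \<longrightarrow>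
                 \<bar>l t x u z1 - l t x u z2\<bar> \<le> K * supnorm (z1 - z2)"
    and psi_min: "\<And>t z. t \<in> {1..T} \<Longrightarrow> in_Delta z \<Longrightarrow>
                 hat_c l t z (\<psi> t z) + Vhat T f l pw (t + 1) (hat_f f pw t z (\<psi> t z))
                   = Vhat T f l pw t z"
  shows "\<exists>C. \<forall>n\<ge>1.
           \<bar>Jcost T f l p0 pw n (\<lambda>t x m. \<psi> t (ztraj f p0 pw \<psi> (t - 1)) x)
              - Jstar T f l p0 pw n\<bar> \<le> C / sqrt (real n)"
proof -
  obtain KP where KP: "\<And>t. t \<in> {1..T} \<Longrightarrow> KP t > 0 \<and> (\<forall>x y u z1 z2. in_I z1 \<longrightarrow> in_I z2 \<longrightarrow>
                 \<bar>trans_prob f pw t y x u z1 - trans_prob f pw t y x u z2\<bar> \<le> KP t * supnorm (z1 - z2))"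
    using bchoice[OF lip_P] by metis
  obtain KL where KL: "\<And>t. t \<in> {1..T} \<Longrightarrow> KL t > 0 \<and> (\<forall>x u z1 z2. in_I z1 \<longrightarrow> in_I z2 \<longrightarrow>
                 \<bar>l t x u z1 - l t x u z2\<bar> \<le> KL t * supnorm (z1 - z2))"
    using bchoice[OF lip_l] by metis
  define K where "K = (\<Sum>t\<in>{1..T}. KP t + KL t)"
  have KK0: "0 \<le> KP t + KL t" if "t \<in> {1..T}" for t
    using KP[OF that] KL[OF that] by linarith
  have KPK: "KP t \<le> K" and KLK: "KL t \<le> K" if "t \<in> {1..T}" for t
  proof -
    have "KP t + KL t \<le> K" unfolding K_def
      using that KK0 by (intro member_le_sum) auto
    then show "KP t \<le> K" "KL t \<le> K" using KP[OF that] KL[OF that] by auto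
  qed
  have K0: "0 \<le> K" unfolding K_def using KK0 by (intro sum_nonneg) auto
  define Bd where "Bd = (\<Sum>t\<in>{1..T}. \<Sum>x\<in>(UNIV::'x set). \<Sum>u\<in>(UNIV::'u set). \<bar>l t x u (\<lambda>_. 0)\<bar>) + K"
  have I0: "in_I (\<lambda>_::'x. 0::real)" by (simp add: in_I_def)
  interpret mfc T f l pw K Bd
  proof
    show "0 \<le> K" by (rule K0)
    show "0 \<le> Bd" unfolding Bd_def using K0 by (auto intro!: sum_nonneg add_nonneg_nonneg)
    fix t x y u and z1 z2 :: "'x \<Rightarrow> real"
    assume t: "t \<in> {1..T}" and z: "in_I z1" "in_I z2"
    have "\<bar>trans_prob f pw t y x u z1 - trans_prob f pw t y x u z2\<bar> \<le> KP t * supnorm (z1 - z2)"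
      using KP[OF t] z by blast
    also have "\<dots> \<le> K * supnorm (z1 - z2)" by (intro mult_right_mono KPK t supnorm_nonneg)
    finally show "\<bar>trans_prob f pw t y x u z1 - trans_prob f pw t y x u z2\<bar> \<le> K * supnorm (z1 - z2)" .
  next
    fix t x u and z1 z2 :: "'x \<Rightarrow> real"
    assume t: "t \<in> {1..T}" and z: "in_I z1" "in_I z2"
    have "\<bar>l t x u z1 - l t x u z2\<bar> \<le> KL t * supnorm (z1 - z2)"
      using KL[OF t] z by blast
    also have "\<dots> \<le> K * supnorm (z1 - z2)" by (intro mult_right_mono KLK t supnorm_nonneg)
    finally show "\<bar>l t x u z1 - l t x u z2\<bar> \<le> K * supnorm (z1 - z2)" .
  next
    fix t x u and z :: "'x \<Rightarrow> real"
    assume t: "t \<in> {1..T}" and z: "in_I z"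
    have s1: "supnorm (z - (\<lambda>_. 0)) \<le> 1" by (rule supnorm_le) (use z in \<open>auto simp: in_I_def\<close>)
    have "\<bar>l t x u z - l t x u (\<lambda>_. 0)\<bar> \<le> KL t * supnorm (z - (\<lambda>_. 0))"
      using KL[OF t] z I0 by blast
    also have "\<dots> \<le> K * 1" using KLK[OF t] KL[OF t] s1 supnorm_nonneg[of "z - (\<lambda>_. 0)"]
      by (intro mult_mono) auto
    finally have a: "\<bar>l t x u z\<bar> \<le> \<bar>l t x u (\<lambda>_. 0)\<bar> + K" by linarith
    have "\<bar>l t x u (\<lambda>_. 0)\<bar> \<le> (\<Sum>u\<in>(UNIV::'u set). \<bar>l t x u (\<lambda>_. 0)\<bar>)"
      by (rule member_le_sum) auto
    also have "\<dots> \<le> (\<Sum>x\<in>(UNIV::'x set). \<Sum>u\<in>(UNIV::'u set). \<bar>l t x u (\<lambda>_. 0)\<bar>)"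
      by (rule member_le_sum[of x UNIV "\<lambda>x. \<Sum>u\<in>(UNIV::'u set). \<bar>l t x u (\<lambda>_. 0)\<bar>"]) (auto intro: sum_nonneg)
    also have "\<dots> \<le> (\<Sum>t\<in>{1..T}. \<Sum>x\<in>(UNIV::'x set). \<Sum>u\<in>(UNIV::'u set). \<bar>l t x u (\<lambda>_. 0)\<bar>)"
      by (rule member_le_sum[OF t]) (auto intro!: sum_nonneg)
    finally show "\<bar>l t x u z\<bar> \<le> Bd" using a unfolding Bd_def by linarith
  qed
  obtain L where L0: "L \<ge> 0" and LV: "\<forall>t\<in>{1..T+1}. \<forall>z1 z2. in_Delta z1 \<longrightarrow> in_Delta z2 \<longrightarrow>
     \<bar>Vhat T f l pw t z1 - Vhat T f l pw t z2\<bar> \<le> L * supnorm (z1 - z2)"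
    using Vhat_lip_unif by blast
  define C1 where "C1 = real (T + 1) * (L * real CARD('x))"
  define C2 where "C2 = real CARD('x) * (Bd + K) * (\<Sum>i<T. Aseq (real CARD('x)) (real CARD('x) * (1 + K)) i)"
  define V where "V = Vhat T f l pw 1 (\<lambda>x. pmf p0 x)"
  show ?thesis
  proof (intro exI[of _ "C1 + C2"] allI impI)
    fix n :: nat assume "n \<ge> 1"
    then have n: "n > 0" by simp
    let ?g = "\<lambda>t x m. \<psi> t (ztraj f p0 pw \<psi> (t - 1)) x"
    have low: "V - C1 / sqrt (real n) \<le> Jcost T f l p0 pw n h" for h
      using lower[OF n L0 LV, of p0 h] unfolding V_def C1_def by simp
    have up: "Jcost T f l p0 pw n ?g \<le> V + C2 / sqrt (real n)"
      using upper[OF n psi_min, of p0] unfolding V_def C2_def by simp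
    have bdd: "bdd_below (range (Jcost T f l p0 pw n))"
      using low by (intro bdd_belowI2) 
    have js1: "Jstar T f l p0 pw n \<le> Jcost T f l p0 pw n ?g"
      unfolding Jstar_def by (rule cINF_lower[OF bdd]) simp
    have js2: "V - C1 / sqrt (real n) \<le> Jstar T f l p0 pw n"
      unfolding Jstar_def by (rule cINF_greatest) (auto intro: low)
    have "\<bar>Jcost T f l p0 pw n ?g - Jstar T f l p0 pw n\<bar> = Jcost T f l p0 pw n ?g - Jstar T f l p0 pw n"
      using js1 by simp
    also have "\<dots> \<le> C1 / sqrt (real n) + C2 / sqrt (real n)" using up js2 by linarith
    also have "\<dots> = (C1 + C2) / sqrt (real n)" by (simp add: add_divide_distrib)
    finally show "\<bar>Jcost T f l p0 pw n ?g - Jstar T f l p0 pw n\<bar> \<le> (C1 + C2) / sqrt (real n)" .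
  qed
qed


end
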